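(* Suppose the index function satisfies $0\le n(\eta)<5$ for all $\eta>0$. Then along the orbit of every regular perfect fluid solution in the variables $(U,Q,\Omega)$ one has $\Phi(U,Q):=(4-7Q)U-3(1-2Q)>0$, i.e. the regular solutions lie on the outer side of the surface $\{\Phi=0\}$, which is the set of regular orbits of the exact polytrope with index $5$. Moreover, on the surface $\{\Phi=0\}$ within the interior of the cube, $\frac{d\Phi}{d\lambda}=3(1-2Q)(1-U)^2Q\,(5-n(\Omega))$, where $Q\le1/2$ on this surface.
   Context: Equation of state: $\rho=\rho(p)$ with $\rho>0$ for $p>0$, $\eta(p)=\int_0^p dp'/\rho(p')$ finite; index function $n(\eta)=\frac{\eta}{\rho}\frac{d\rho}{d\eta}$. Regular perfect fluid solution: solution of $dm/dr=4\pi r^2\rho(p)$, $dp/dr=-m\rho(p)/r^2$ with $m\to0$, $p\to p_c\in(0,\infty)$ as $r\to0$. Variables: $U=u/(1+u)$, $Q=q/(1+q)$, $\Omega=\omega/(1+\omega)$ with $u=4\pi r^3\rho/m$, $q=m/(r\eta)$, $\omega=\eta^a$ ($a>0$), satisfying $\frac{dU}{d\lambda}=U(1-U)[(1-Q)(3-4U)-n(\Omega)Q(1-U)]$, $\frac{dQ}{d\lambda}=Q(1-Q)[(2U-1)(1-Q)+Q(1-U)]$, $\frac{d\Omega}{d\lambda}=-a\Omega(1-\Omega)Q(1-U)$ on the cube $[0,1]^3$, where $n(\Omega)=n(\eta)$ at $\eta=(\Omega/(1-\Omega))^{1/a}$. Regular orbits emanate as $\lambda\to-\infty$ from the line $\{U=3/4,Q=0\}$.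 *)

theory Defs
  imports "HOL-Analysis.Analysis"
begin

definition eta :: "(real \<Rightarrow> real) \<Rightarrow> real \<Rightarrow> real" where
  "eta \<rho> p = integral {0..p} (\<lambda>s. 1 / \<rho> s)"

definition pres_of_eta :: "(real \<Rightarrow> real) \<Rightarrow> real \<Rightarrow> real" where
  "pres_of_eta \<rho> e = (THE p. 0 < p \<and> eta \<rho> p = e)"

definition n_index :: "(real \<Rightarrow> real) \<Rightarrow> real \<Rightarrow> real" where
  "n_index \<rho> e = e / \<rho> (pres_of_eta \<rho> e) * deriv (\<lambda>x. \<rho> (pres_of_eta \<rho> x)) e"

definition n_Omega :: "(real \<Rightarrow> real) \<Rightarrow> real \<Rightarrow> real \<Rightarrow> real" where
  "n_Omega \<rho> a \<Omega> = n_index \<rho> ((\<Omega> / (1 - \<Omega>)) powr (1 / a))"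

definition regular_solution ::
  "(real \<Rightarrow> real) \<Rightarrow> real \<Rightarrow> (real \<Rightarrow> real) \<Rightarrow> (real \<Rightarrow> real) \<Rightarrow> real \<Rightarrow> bool" where
  "regular_solution \<rho> R m p pc \<longleftrightarrow>
     0 < pc \<and>
     (\<forall>r\<in>{0<..<R}. 0 < p r \<and>
        (m has_real_derivative 4 * pi * r\<^sup>2 * \<rho> (p r)) (at r) \<and>
        (p has_real_derivative - (m r * \<rho> (p r)) / r\<^sup>2) (at r)) \<and>
     (m \<longlongrightarrow> 0) (at_right 0) \<and> (p \<longlongrightarrow> pc) (at_right 0)"

definition Phi :: "real \<Rightarrow> real \<Rightarrow> real" where
  "Phi U Q = (4 - 7 * Q) * U - 3 * (1 - 2 * Q)"

definition U_var :: "(real \<Rightarrow> real) \<Rightarrow> (real \<Rightarrow> real) \<Rightarrow> (real \<Rightarrow> real) \<Rightarrow> real \<Rightarrow> real" where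
  "U_var \<rho> m p r = (let u = 4 * pi * r ^ 3 * \<rho> (p r) / m r in u / (1 + u))"

definition Q_var :: "(real \<Rightarrow> real) \<Rightarrow> (real \<Rightarrow> real) \<Rightarrow> (real \<Rightarrow> real) \<Rightarrow> real \<Rightarrow> real" where
  "Q_var \<rho> m p r = (let q = m r / (r * eta \<rho> (p r)) in q / (1 + q))"

text \<open>Vector field components (with n the value n(Omega)).\<close>
definition FU :: "real \<Rightarrow> real \<Rightarrow> real \<Rightarrow> real" where
  "FU n U Q = U * (1 - U) * ((1 - Q) * (3 - 4 * U) - n * Q * (1 - U))"

definition FQ :: "real \<Rightarrow> real \<Rightarrow> real" where
  "FQ U Q = Q * (1 - Q) * ((2 * U - 1) * (1 - Q) + Q * (1 - U))"

end

theory Submission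
  imports Defs
begin


lemma eta_deriv:
  fixes \<rho> :: "real \<Rightarrow> real"
  assumes rho_pos: "\<forall>p>0. 0 < \<rho> p"
    and diff: "\<forall>p>0. \<rho> differentiable (at p)"
    and fin: "\<forall>p>0. (\<lambda>s. 1 / \<rho> s) integrable_on {0..p}"
    and x: "0 < x"
  shows "(eta \<rho> has_real_derivative 1 / \<rho> x) (at x)"
proof -
  have int: "(\<lambda>s. 1 / \<rho> s) integrable_on {0..x+1}" using fin x by simp
  have cr: "isCont \<rho> x" using diff x differentiable_imp_continuous_within by blast
  have c: "isCont (\<lambda>s. 1 / \<rho> s) x" using cr rho_pos x by (auto intro!: continuous_intros)
  have "((\<lambda>u. integral {0..u} (\<lambda>s. 1 / \<rho> s)) has_vector_derivative 1 / \<rho> x) (at x within ({0..x+1} - {}))"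
    apply (rule integral_has_vector_derivative_continuous_at[OF int])
    using x c continuous_at_imp_continuous_at_within by auto
  moreover have "at x within {0..x+1} = at x"
    by (rule at_within_interior) (use x in auto)
  ultimately show ?thesis
    by (simp add: eta_def[abs_def] has_real_derivative_iff_has_vector_derivative)
qed

lemma eta_mono:
  fixes \<rho> :: "real \<Rightarrow> real"
  assumes rho_pos: "\<forall>p>0. 0 < \<rho> p"
    and diff: "\<forall>p>0. \<rho> differentiable (at p)"
    and fin: "\<forall>p>0. (\<lambda>s. 1 / \<rho> s) integrable_on {0..p}"
    and x: "0 < x" "x < y"
  shows "eta \<rho> x < eta \<rho> y"
  apply (rule DERIV_pos_imp_increasing[OF x(2)])
  subgoal for z using eta_deriv[OF rho_pos diff fin, of z] x rho_pos by auto
  done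

lemma eta_nonneg:
  fixes \<rho> :: "real \<Rightarrow> real"
  assumes rho_pos: "\<forall>p>0. 0 < \<rho> p"
    and fin: "\<forall>p>0. (\<lambda>s. 1 / \<rho> s) integrable_on {0..p}"
    and x: "0 < x"
  shows "0 \<le> eta \<rho> x"
proof -
  let ?g = "\<lambda>s. if s = 0 then 0 else 1 / \<rho> s"
  have eq: "integral {0..x} (\<lambda>s. 1 / \<rho> s) = integral {0..x} ?g"
    by (rule integral_spike[of "{0}"]) auto
  have "?g integrable_on {0..x}"
    by (rule integrable_spike[of "\<lambda>s. 1 / \<rho> s" _ "{0}"]) (use fin x in auto)
  then have "0 \<le> integral {0..x} ?g"
    by (rule integral_nonneg) (use rho_pos in \<open>auto intro!: less_imp_le\<close>)
  then show ?thesis by (simp add: eta_def eq)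
qed

lemma eta_pos:
  fixes \<rho> :: "real \<Rightarrow> real"
  assumes rho_pos: "\<forall>p>0. 0 < \<rho> p"
    and diff: "\<forall>p>0. \<rho> differentiable (at p)"
    and fin: "\<forall>p>0. (\<lambda>s. 1 / \<rho> s) integrable_on {0..p}"
    and x: "0 < x"
  shows "0 < eta \<rho> x"
  using eta_nonneg[OF rho_pos fin, of "x/2"] eta_mono[OF rho_pos diff fin, of "x/2" x] x by auto

lemma pres_eta:
  fixes \<rho> :: "real \<Rightarrow> real"
  assumes rho_pos: "\<forall>p>0. 0 < \<rho> p"
    and diff: "\<forall>p>0. \<rho> differentiable (at p)"
    and fin: "\<forall>p>0. (\<lambda>s. 1 / \<rho> s) integrable_on {0..p}"
    and x: "0 < x"
  shows "pres_of_eta \<rho> (eta \<rho> x) = x"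
  unfolding pres_of_eta_def
proof (rule the_equality)
  fix y assume y: "0 < y \<and> eta \<rho> y = eta \<rho> x"
  show "y = x"
  proof (rule ccontr)
    assume "y \<noteq> x"
    then consider "y < x" | "x < y" by linarith
    then show False using eta_mono[OF rho_pos diff fin] x y by (metis less_irrefl)
  qed
qed (use x in auto)

lemma n_formula:
  fixes \<rho> :: "real \<Rightarrow> real"
  assumes rho_pos: "\<forall>p>0. 0 < \<rho> p"
    and diff: "\<forall>p>0. \<rho> differentiable (at p)"
    and fin: "\<forall>p>0. (\<lambda>s. 1 / \<rho> s) integrable_on {0..p}"
    and x: "0 < x"
  shows "n_index \<rho> (eta \<rho> x) = eta \<rho> x * deriv \<rho> x"
proof -
  let ?g = "pres_of_eta \<rho>" and ?f = "eta \<rho>"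
  have ge: "\<And>z. 0 < z \<Longrightarrow> ?g (?f z) = z" using pres_eta[OF rho_pos diff fin] by blast
  have fc: "\<And>z. 0 < z \<Longrightarrow> isCont ?f z"
    using eta_deriv[OF rho_pos diff fin] DERIV_isCont by blast
  have cont: "isCont ?g (?f x)"
    by (rule isCont_inverse_function2[of "x/2" x "2*x"]) (use x ge fc in auto)
  have inj: "?f (?g y) = y" if yy: "?f (x/2) < y" "y < ?f (2*x)" for y
  proof -
    have "continuous_on {x/2..2*x} ?f"
      using fc x by (intro continuous_at_imp_continuous_on) auto
    then obtain z where z: "x/2 \<le> z" "z \<le> 2*x" "?f z = y"
      using IVT'[of ?f "x/2" y "2*x"] yy x by fastforce
    then show ?thesis using ge[of z] x by auto
  qed
  have dg: "DERIV ?g (?f x) :> inverse (1 / \<rho> x)"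
    apply (rule DERIV_inverse_function[where f="?f" and g="?g" and a="?f (x/2)" and b="?f (2*x)"])
    using ge[OF x] eta_deriv[OF rho_pos diff fin x] rho_pos x
      eta_mono[OF rho_pos diff fin, of "x/2" x] eta_mono[OF rho_pos diff fin, of x "2*x"] inj cont
    by auto
  have dr: "DERIV \<rho> (?g (?f x)) :> deriv \<rho> x"
    using ge[OF x] diff x DERIV_deriv_iff_real_differentiable by auto
  have "DERIV (\<lambda>y. \<rho> (?g y)) (?f x) :> deriv \<rho> x * inverse (1 / \<rho> x)"
    by (rule DERIV_chain2[OF dr dg])
  then have "deriv (\<lambda>y. \<rho> (?g y)) (?f x) = deriv \<rho> x * \<rho> x"
    using DERIV_imp_deriv by fastforce
  moreover have "\<rho> x > 0" using rho_pos x by simp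
  ultimately show ?thesis using ge[OF x] by (simp add: n_index_def)
qed

lemma Phi_ring: "Phi A B * (X * Y) = ((4 - 7*B) * Y) * (A * X) - 3 * ((1 - 2*B) * Y) * X"
  unfolding Phi_def by algebra

lemma part1:
  fixes \<rho> :: "real \<Rightarrow> real"
  assumes rho_pos: "\<forall>p>0. 0 < \<rho> p"
    and diff: "\<forall>p>0. \<rho> differentiable (at p)"
    and fin: "\<forall>p>0. (\<lambda>s. 1 / \<rho> s) integrable_on {0..p}"
    and n_bounds: "\<forall>p>0. 0 \<le> n_index \<rho> (eta \<rho> p) \<and> n_index \<rho> (eta \<rho> p) < 5"
    and R: "0 < R" and reg: "regular_solution \<rho> R m p pc" and r: "r \<in> {0<..<R}"
  shows "Phi (U_var \<rho> m p r) (Q_var \<rho> m p r) > 0"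
proof -
  have pc: "0 < pc" and D: "\<And>s. s \<in> {0<..<R} \<Longrightarrow> 0 < p s \<and>
        (m has_real_derivative 4 * pi * s\<^sup>2 * \<rho> (p s)) (at s) \<and>
        (p has_real_derivative - (m s * \<rho> (p s)) / s\<^sup>2) (at s)"
    and mlim: "(m \<longlongrightarrow> 0) (at_right 0)" and plim: "(p \<longlongrightarrow> pc) (at_right 0)"
    using reg unfolding regular_solution_def by auto
  define e where "e = (\<lambda>s. eta \<rho> (p s))"
  define rr where "rr = (\<lambda>s. \<rho> (p s))"
  have pp: "0 < p s" if "s \<in> {0<..<R}" for s using D that by blast
  have rrpos: "0 < rr s" if "s \<in> {0<..<R}" for s using pp[OF that] rho_pos rr_def by simp
  have epos: "0 < e s" if "s \<in> {0<..<R}" for s using pp[OF that] eta_pos[OF rho_pos diff fin] e_def by simp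
  have dm: "(m has_real_derivative 4 * pi * s\<^sup>2 * rr s) (at s)" if "s \<in> {0<..<R}" for s
    using D[OF that] rr_def by simp
  have dp: "(p has_real_derivative - (m s * rr s) / s\<^sup>2) (at s)" if "s \<in> {0<..<R}" for s
    using D[OF that] rr_def by simp
  have de: "(e has_real_derivative - m s / s\<^sup>2) (at s)" if s: "s \<in> {0<..<R}" for s
  proof -
    have "((\<lambda>s. eta \<rho> (p s)) has_real_derivative 1 / \<rho> (p s) * (- (m s * rr s) / s\<^sup>2)) (at s)"
      by (rule DERIV_chain2[OF eta_deriv[OF rho_pos diff fin pp[OF s]] dp[OF s]])
    then show ?thesis using rrpos[OF s] unfolding e_def rr_def by simp
  qed
  have dr: "(rr has_real_derivative deriv \<rho> (p s) * (- (m s * rr s) / s\<^sup>2)) (at s)" if s: "s \<in> {0<..<R}" for s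
  proof -
    have "DERIV \<rho> (p s) :> deriv \<rho> (p s)"
      using diff pp[OF s] DERIV_deriv_iff_real_differentiable by blast
    from DERIV_chain2[OF this dp[OF s]] show ?thesis unfolding rr_def .
  qed
  have mmono: "m a < m b" if "0 < a" "a < b" "b < R" for a b
    apply (rule DERIV_pos_imp_increasing[OF that(2)])
    subgoal for y using dm[of y] rrpos[of y] that by (intro exI[of _ "4 * pi * y\<^sup>2 * rr y"]) auto
    done
  have mnn: "0 \<le> m s" if "0 < s" "s < R" for s
  proof (rule tendsto_upperbound[OF mlim])
    show "\<forall>\<^sub>F i in at_right 0. m i \<le> m s"
      unfolding eventually_at_right_field using that mmono by (intro exI[of _ s]) (auto intro: less_imp_le)
  qed simp
  have mpos: "0 < m s" if "0 < s" "s < R" for s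
    using mnn[of "s/2"] mmono[of "s/2" s] that by auto
  define G where "G = (\<lambda>s. 4 * pi * (s ^ 3) * rr s * e s + 3 * (m s)^2 / s - 3 * m s * e s)"
  have dG: "(G has_real_derivative (4*pi* s*rr s*m s*(5 - e s * deriv \<rho> (p s)))) (at s)" if s: "s \<in> {0<..<R}" for s
  proof -
    have "(G has_real_derivative
       4*pi*(3* s^2*rr s*e s + s^3*(deriv \<rho> (p s) * (- (m s * rr s) / s\<^sup>2))*e s + s^3*rr s*(- m s / s\<^sup>2))
       + 3*(2*m s*(4 * pi * s\<^sup>2 * rr s)* s - (m s)^2)/s^2
       - 3*((4 * pi * s\<^sup>2 * rr s)*e s + m s*(- m s / s\<^sup>2))) (at s)"
      unfolding G_def using s
      by (auto intro!: derivative_eq_intros dm[OF s] dr[OF s] de[OF s] simp: field_simps power2_eq_square power3_eq_cube)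
    moreover have "4*pi*(3* s^2*rr s*e s + s^3*(deriv \<rho> (p s) * (- (m s * rr s) / s\<^sup>2))*e s + s^3*rr s*(- m s / s\<^sup>2))
       + 3*(2*m s*(4 * pi * s\<^sup>2 * rr s)* s - (m s)^2)/s^2
       - 3*((4 * pi * s\<^sup>2 * rr s)*e s + m s*(- m s / s\<^sup>2)) = 4*pi* s*rr s*m s*(5 - e s * deriv \<rho> (p s))"
      using s by (simp add: field_simps power2_eq_square power3_eq_cube)
    ultimately show ?thesis by simp
  qed
  have nlt: "e s * deriv \<rho> (p s) < 5" if s: "s \<in> {0<..<R}" for s
    using n_bounds pp[OF s] n_formula[OF rho_pos diff fin pp[OF s]] e_def by auto
  have Gmono: "G a < G b" if "0 < a" "a < b" "b < R" for a b
    apply (rule DERIV_pos_imp_increasing[OF that(2)])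
    subgoal for y using dG[of y] rrpos[of y] mpos[of y] nlt[of y] that
      by (intro exI[of _ "4*pi*y*rr y*m y*(5 - e y * deriv \<rho> (p y))"]) auto
    done
  define H where "H = (\<lambda>s. 4 * pi * (s ^ 3) * rr s * e s - 3 * m s * e s)"
  have Hlim: "(H \<longlongrightarrow> 4*pi*0^3*\<rho> pc*eta \<rho> pc - 3*0*eta \<rho> pc) (at_right 0)"
  proof -
    have c1: "isCont \<rho> pc" using diff pc differentiable_imp_continuous_within by blast
    have c2: "isCont (eta \<rho>) pc" using eta_deriv[OF rho_pos diff fin pc] DERIV_isCont by blast
    have l1: "(rr \<longlongrightarrow> \<rho> pc) (at_right 0)" unfolding rr_def by (rule isCont_tendsto_compose[OF c1 plim])
    have l2: "(e \<longlongrightarrow> eta \<rho> pc) (at_right 0)" unfolding e_def by (rule isCont_tendsto_compose[OF c2 plim])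
    have l0: "((\<lambda>s::real. s) \<longlongrightarrow> 0) (at_right 0)" by (rule tendsto_ident_at)
    show ?thesis unfolding H_def by (intro tendsto_intros l0 l1 l2 mlim)
  qed
  have Gnn: "0 \<le> G t" if "0 < t" "t < R" for t
  proof -
    have "H s \<le> G t" if "0 < s" "s < t" for s
    proof -
      have "H s \<le> G s" unfolding H_def G_def using that by simp
      also have "\<dots> < G t" using Gmono[of s t] that \<open>t < R\<close> by simp
      finally show ?thesis by simp
    qed
    then have "\<forall>\<^sub>F s in at_right 0. H s \<le> G t"
      unfolding eventually_at_right_field using \<open>0 < t\<close> by (intro exI[of _ t]) auto
    from tendsto_upperbound[OF Hlim this] show ?thesis by simp
  qed
  have r0: "0 < r" "r < R" using r by auto
  have Gpos: "0 < G r" using Gnn[of "r/2"] Gmono[of "r/2" r] r0 by auto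
  define u where "u = 4 * pi * r ^ 3 * rr r / m r"
  define q where "q = m r / (r * e r)"
  have mr: "0 < m r" using mpos r0 by simp
  have er: "0 < e r" using epos r by simp
  have rrr: "0 < rr r" using rrpos r by simp
  have up: "0 < u" unfolding u_def using mr rrr r0 by simp
  have qp: "0 < q" unfolding q_def using mr er r0 by simp
  have key: "u + 3*q - 3 = G r / (m r * e r)"
    unfolding u_def q_def G_def using mr er r0 by (simp add: field_simps power2_eq_square power3_eq_cube)
  have "u + 3*q - 3 > 0" unfolding key using Gpos mr er by simp
  moreover have h: "Phi (u/(1+u)) (q/(1+q)) * ((1+u)*(1+q)) = u + 3*q - 3"
  proof -
    have a1: "(4 - 7*(q/(1+q))) * (1+q) = 4 - 3*q" using qp by (simp add: field_simps)
    have a2: "(1 - 2*(q/(1+q))) * (1+q) = 1 - q" using qp by (simp add: field_simps)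
    have a3: "u/(1+u) * (1+u) = u" using up by simp
    have "Phi (u/(1+u)) (q/(1+q)) * ((1+u)*(1+q))
        = ((4 - 7*(q/(1+q))) * (1+q)) * (u/(1+u) * (1+u)) - 3 * ((1 - 2*(q/(1+q))) * (1+q)) * (1+u)"
      by (rule Phi_ring)
    also have "\<dots> = u + 3*q - 3" unfolding a1 a2 a3 by (simp add: algebra_simps)
    finally show ?thesis .
  qed
  ultimately have "Phi (u/(1+u)) (q/(1+q)) > 0" using up qp by (metis zero_less_mult_iff add_pos_pos zero_less_one not_less_iff_gr_or_eq)
  then show ?thesis unfolding U_var_def Q_var_def Let_def u_def q_def rr_def e_def .
qed

lemma part2:
  fixes U Q n :: real
  assumes "U \<in> {0<..<1}" "Q \<in> {0<..<1}" "Phi U Q = 0"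
  shows "Q \<le> 1/2 \<and> (4 - 7 * Q) * FU n U Q + (6 - 7 * U) * FQ U Q
                  = 3 * (1 - 2 * Q) * (1 - U)\<^sup>2 * Q * (5 - n)"
proof -
  have P: "(4 - 7 * Q) * U = 3 * (1 - 2 * Q)" using assms(3) unfolding Phi_def by simp
  have q47: "4 - 7 * Q \<noteq> 0" using P assms(2) by auto
  have Ueq: "U = 3 * (1 - 2 * Q) / (4 - 7 * Q)" using P q47 by (simp add: field_simps)
  have "Q \<le> 1/2"
  proof (rule ccontr)
    assume "\<not> Q \<le> 1/2"
    then have "3 * (1 - 2 * Q) < 0" by simp
    moreover have "0 \<le> (4 - 7 * Q) * U" if "0 \<le> 4 - 7 * Q" using that assms(1) by simp
    ultimately have "4 - 7 * Q < 0" using P by linarith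
    then have "(4 - 7 * Q) * U > (4 - 7*Q)" using assms(1) by (simp add: mult_less_cancel_left_neg)
    then show False using P assms(2) by simp
  qed
  moreover have "(4 - 7 * Q) * FU n U Q + (6 - 7 * U) * FQ U Q
                  = 3 * (1 - 2 * Q) * (1 - U)\<^sup>2 * Q * (5 - n)"
  proof -
    have "(4 - 7 * Q) * FU n U Q + (6 - 7 * U) * FQ U Q - 3 * (1 - 2 * Q) * (1 - U)\<^sup>2 * Q * (5 - n)
       = Phi U Q * (3*U*Q^2 - 2*Q^2 - U^2*Q*n - 4*U^2*Q + 2*U*Q*n - 4*U*Q - Q*n + 7*Q + 4*U^2 - 4*U)"
      unfolding Phi_def FU_def FQ_def by algebra
    then show ?thesis using assms(3) by simp
  qed
  ultimately show ?thesis by simp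
qed


theorem mainTheorem8:
  fixes \<rho> :: "real \<Rightarrow> real" and a :: real
  assumes rho_pos: "\<forall>p>0. 0 < \<rho> p"
    and rho_C1: "\<forall>p>0. \<rho> differentiable (at p)" "continuous_on {0<..} (deriv \<rho>)"
    and eta_finite: "\<forall>p>0. (\<lambda>s. 1 / \<rho> s) integrable_on {0..p}"
    and n_bounds: "\<forall>p>0. 0 \<le> n_index \<rho> (eta \<rho> p) \<and> n_index \<rho> (eta \<rho> p) < 5"
    and a_pos: "0 < a"
  shows "(\<forall>R m p pc r. 0 < R \<and> regular_solution \<rho> R m p pc \<and> r \<in> {0<..<R}
            \<longrightarrow> Phi (U_var \<rho> m p r) (Q_var \<rho> m p r) > 0)
       \<and> (\<forall>U Q \<Omega>. U \<in> {0<..<1} \<and> Q \<in> {0<..<1} \<and> \<Omega> \<in> {0<..<1} \<and> Phi U Q = 0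
            \<longrightarrow> Q \<le> 1/2 \<and>
                (4 - 7 * Q) * FU (n_Omega \<rho> a \<Omega>) U Q + (6 - 7 * U) * FQ U Q
                  = 3 * (1 - 2 * Q) * (1 - U)\<^sup>2 * Q * (5 - n_Omega \<rho> a \<Omega>))"
proof (intro conjI allI impI)
  fix R m p pc r
  assume H: "0 < R \<and> regular_solution \<rho> R m p pc \<and> r \<in> {0<..<R}"
  then show "Phi (U_var \<rho> m p r) (Q_var \<rho> m p r) > 0"
    using part1[OF rho_pos rho_C1(1) eta_finite n_bounds] by blast
next
  fix U Q \<Omega> :: real
  assume "U \<in> {0<..<1} \<and> Q \<in> {0<..<1} \<and> \<Omega> \<in> {0<..<1} \<and> Phi U Q = 0"
  then show "Q \<le> 1/2" and "(4 - 7 * Q) * FU (n_Omega \<rho> a \<Omega>) U Q + (6 - 7 * U) * FQ U Q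
                  = 3 * (1 - 2 * Q) * (1 - U)\<^sup>2 * Q * (5 - n_Omega \<rho> a \<Omega>)"
    using part2[of U Q] by auto
qed

end
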